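(* For every finite graph $G$, $\mathrm{cw}(G) \leq 2^{\mathrm{mcw}(G)}$.
   Context: A $k$-expression is built from: atoms $i(v)$ creating a vertex $v$ with label $i\in\{1,\dots,k\}$; $\eta_{i,j}$ ($i\neq j$) adding an edge between every vertex labeled $i$ and every vertex labeled $j$; $\rho_{i\to j}$ changing every label $i$ to $j$; and $\oplus$, disjoint union. The generated graph is obtained by deleting labels. The clique-width $\mathrm{cw}(G)$ is the smallest $k$ such that $G$ is generated by a $k$-expression. A multi-$k$-expression is built as follows, where each vertex carries a (possibly empty) set of labels from $\{1,\dots,k\}$: atoms $m\langle i_1,\dots,i_\ell\rangle$ (with $m$ a positive integer and $i_1<\dots<i_\ell\le k$, possibly $\ell=0$) create $m$ vertices, each with label set $\{i_1,\dots,i_\ell\}$; $\eta_{i,j}$ creates an edge between every vertex having label $i$ and every vertex having label $j$, allowed only when no vertex has both labels $i$ and $j$; $\rho_{i\to S}$ for $S\subseteq\{1,\dots,k\}$ replaces label $i$ by the set $S$ (a vertex with label set $S'\ni i$ gets $(S'\setminus\{i\})\cup S$); $\varepsilon_i$ deletes label $i$ from all vertices; $\oplus$ is disjoint union. The generated graph is obtained by deleting all labels. The multi-clique-width $\mathrm{mcw}(G)$ is the smallest $k$ such that $G$ is generated by a multi-$k$-expression. *)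

theory Defs
  imports Main
begin

definition fin_graph :: "'v set \<Rightarrow> ('v \<times> 'v) set \<Rightarrow> bool" where
  "fin_graph V E \<longleftrightarrow> finite V \<and> E \<subseteq> V \<times> V \<and> sym E \<and> (\<forall>v. (v, v) \<notin> E)"

definition graph_iso ::
  "'a set \<Rightarrow> ('a \<times> 'a) set \<Rightarrow> 'b set \<Rightarrow> ('b \<times> 'b) set \<Rightarrow> bool" where
  "graph_iso V E W F \<longleftrightarrow>
     (\<exists>f. bij_betw f V W \<and> (\<forall>u\<in>V. \<forall>v\<in>V. (u, v) \<in> E \<longleftrightarrow> (f u, f v) \<in> F))"

text \<open>Vertices created by an expression are represented canonically by their position
  in the expression tree (a list of 0/1 branch choices, plus an index for
  multi-atoms).\<close>

datatype kexp =
    KAtom nat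
  | KEta nat nat kexp
  | KRho nat nat kexp
  | KUnion kexp kexp

fun kverts :: "kexp \<Rightarrow> nat list set" where
  "kverts (KAtom i) = {[]}"
| "kverts (KEta i j e) = kverts e"
| "kverts (KRho i j e) = kverts e"
| "kverts (KUnion a b) = Cons 0 ` kverts a \<union> Cons 1 ` kverts b"

fun klab :: "kexp \<Rightarrow> nat list \<Rightarrow> nat" where
  "klab (KAtom i) = (\<lambda>v. i)"
| "klab (KEta i j e) = klab e"
| "klab (KRho i j e) = (\<lambda>v. if klab e v = i then j else klab e v)"
| "klab (KUnion a b) = (\<lambda>v. case v of 0 # w \<Rightarrow> klab a w | _ # w \<Rightarrow> klab b w | [] \<Rightarrow> 0)"

fun kedges :: "kexp \<Rightarrow> (nat list \<times> nat list) set" where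
  "kedges (KAtom i) = {}"
| "kedges (KEta i j e) = kedges e \<union>
     {(u, v). u \<in> kverts e \<and> v \<in> kverts e \<and>
              ((klab e u = i \<and> klab e v = j) \<or> (klab e u = j \<and> klab e v = i))}"
| "kedges (KRho i j e) = kedges e"
| "kedges (KUnion a b) = (\<lambda>(u, v). (0 # u, 0 # v)) ` kedges a \<union> (\<lambda>(u, v). (1 # u, 1 # v)) ` kedges b"

fun kexpr :: "nat \<Rightarrow> kexp \<Rightarrow> bool" where
  "kexpr k (KAtom i) \<longleftrightarrow> i \<in> {1..k}"
| "kexpr k (KEta i j e) \<longleftrightarrow> i \<in> {1..k} \<and> j \<in> {1..k} \<and> i \<noteq> j \<and> kexpr k e"
| "kexpr k (KRho i j e) \<longleftrightarrow> i \<in> {1..k} \<and> j \<in> {1..k} \<and> kexpr k e"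
| "kexpr k (KUnion a b) \<longleftrightarrow> kexpr k a \<and> kexpr k b"

definition cw :: "'v set \<Rightarrow> ('v \<times> 'v) set \<Rightarrow> nat" where
  "cw V E = (LEAST k. \<exists>e. kexpr k e \<and> graph_iso (kverts e) (kedges e) V E)"

datatype mexp =
    MAtom nat "nat set"
  | MEta nat nat mexp
  | MRho nat "nat set" mexp
  | MEps nat mexp
  | MUnion mexp mexp

fun mverts :: "mexp \<Rightarrow> nat list set" where
  "mverts (MAtom m S) = {[n] | n. n < m}"
| "mverts (MEta i j e) = mverts e"
| "mverts (MRho i S e) = mverts e"
| "mverts (MEps i e) = mverts e"
| "mverts (MUnion a b) = Cons 0 ` mverts a \<union> Cons 1 ` mverts b"

fun mlab :: "mexp \<Rightarrow> nat list \<Rightarrow> nat set" where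
  "mlab (MAtom m S) = (\<lambda>v. S)"
| "mlab (MEta i j e) = mlab e"
| "mlab (MRho i S e) = (\<lambda>v. if i \<in> mlab e v then (mlab e v - {i}) \<union> S else mlab e v)"
| "mlab (MEps i e) = (\<lambda>v. mlab e v - {i})"
| "mlab (MUnion a b) = (\<lambda>v. case v of 0 # w \<Rightarrow> mlab a w | _ # w \<Rightarrow> mlab b w | [] \<Rightarrow> {})"

fun medges :: "mexp \<Rightarrow> (nat list \<times> nat list) set" where
  "medges (MAtom m S) = {}"
| "medges (MEta i j e) = medges e \<union>
     {(u, v). u \<in> mverts e \<and> v \<in> mverts e \<and>
              ((i \<in> mlab e u \<and> j \<in> mlab e v) \<or> (j \<in> mlab e u \<and> i \<in> mlab e v))}"
| "medges (MRho i S e) = medges e"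
| "medges (MEps i e) = medges e"
| "medges (MUnion a b) = (\<lambda>(u, v). (0 # u, 0 # v)) ` medges a \<union> (\<lambda>(u, v). (1 # u, 1 # v)) ` medges b"

fun mexpr :: "nat \<Rightarrow> mexp \<Rightarrow> bool" where
  "mexpr k (MAtom m S) \<longleftrightarrow> 0 < m \<and> S \<subseteq> {1..k}"
| "mexpr k (MEta i j e) \<longleftrightarrow> i \<in> {1..k} \<and> j \<in> {1..k} \<and> i \<noteq> j \<and> mexpr k e \<and>
     (\<forall>v\<in>mverts e. \<not> (i \<in> mlab e v \<and> j \<in> mlab e v))"
| "mexpr k (MRho i S e) \<longleftrightarrow> i \<in> {1..k} \<and> S \<subseteq> {1..k} \<and> mexpr k e"
| "mexpr k (MEps i e) \<longleftrightarrow> i \<in> {1..k} \<and> mexpr k e"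
| "mexpr k (MUnion a b) \<longleftrightarrow> mexpr k a \<and> mexpr k b"

definition mcw :: "'v set \<Rightarrow> ('v \<times> 'v) set \<Rightarrow> nat" where
  "mcw V E = (LEAST k. \<exists>e. mexpr k e \<and> graph_iso (mverts e) (medges e) V E)"

end

theory Submission
  imports Defs
begin

lemma iso_sym:
  assumes "graph_iso V E W F" shows "graph_iso W F V E"
proof -
  obtain f where f: "bij_betw f V W" "\<forall>u\<in>V. \<forall>v\<in>V. (u, v) \<in> E \<longleftrightarrow> (f u, f v) \<in> F"
    using assms unfolding graph_iso_def by blast
  let ?g = "inv_into V f"
  have g: "bij_betw ?g W V" using f(1) by (rule bij_betw_inv_into)
  have "\<forall>u\<in>W. \<forall>v\<in>W. (u, v) \<in> F \<longleftrightarrow> (?g u, ?g v) \<in> E"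
  proof (intro ballI)
    fix u v assume "u \<in> W" "v \<in> W"
    then have "?g u \<in> V" "?g v \<in> V" "f (?g u) = u" "f (?g v) = v"
      using f(1) g by (auto simp: bij_betw_def f_inv_into_f inv_into_into)
    then show "(u, v) \<in> F \<longleftrightarrow> (?g u, ?g v) \<in> E" using f(2) by metis
  qed
  then show ?thesis unfolding graph_iso_def using g by blast
qed

lemma iso_trans:
  assumes "graph_iso V E W F" "graph_iso W F X H" shows "graph_iso V E X H"
proof -
  obtain f where f: "bij_betw f V W" "\<forall>u\<in>V. \<forall>v\<in>V. (u, v) \<in> E \<longleftrightarrow> (f u, f v) \<in> F"
    using assms(1) unfolding graph_iso_def by blast
  obtain g where g: "bij_betw g W X" "\<forall>u\<in>W. \<forall>v\<in>W. (u, v) \<in> F \<longleftrightarrow> (g u, g v) \<in> H"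
    using assms(2) unfolding graph_iso_def by blast
  have "bij_betw (g \<circ> f) V X" using f(1) g(1) by (rule bij_betw_trans)
  moreover have "\<forall>u\<in>V. \<forall>v\<in>V. (u, v) \<in> E \<longleftrightarrow> ((g \<circ> f) u, (g \<circ> f) v) \<in> H"
    using f g by (auto simp: bij_betw_def)
  ultimately show ?thesis unfolding graph_iso_def by blast
qed

fun tr :: "kexp \<Rightarrow> mexp" where
  "tr (KAtom i) = MAtom 1 {i}"
| "tr (KEta i j e) = MEta i j (tr e)"
| "tr (KRho i j e) = MRho i {j} (tr e)"
| "tr (KUnion a b) = MUnion (tr a) (tr b)"

lemma tr_verts: "mverts (tr e) = (\<lambda>v. v @ [0]) ` kverts e"
  by (induction e) auto

lemma tr_lab: "v \<in> kverts e \<Longrightarrow> mlab (tr e) (v @ [0]) = {klab e v}"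
  by (induction e arbitrary: v) auto

lemma tr_edges: "medges (tr e) = (\<lambda>p. (fst p @ [0], snd p @ [0])) ` kedges e"
proof (induction e)
  case (KEta i j e)
  show ?case
    by (auto simp: KEta tr_verts tr_lab image_iff split_def; metis (mono_tags, lifting) Un_iff fst_conv snd_conv mem_Collect_eq)
next
  case (KUnion a b)
  show ?case unfolding tr.simps medges.simps kedges.simps KUnion image_Un image_image
    by (simp add: split_def)
qed auto

lemma tr_expr: "kexpr k e \<Longrightarrow> mexpr k (tr e)"
  by (induction e) (auto simp: tr_verts tr_lab)

lemma tr_iso: "graph_iso (kverts e) (kedges e) (mverts (tr e)) (medges (tr e))"
  unfolding graph_iso_def
  by (rule exI[of _ "\<lambda>v. v @ [0]"]) (auto simp: bij_betw_def inj_on_def tr_verts tr_edges image_iff split_def; metis fst_conv snd_conv)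


fun etaL :: "(nat \<times> nat) list \<Rightarrow> kexp \<Rightarrow> kexp" where
  "etaL [] e = e"
| "etaL (p # ps) e = KEta (fst p) (snd p) (etaL ps e)"

fun rhoL :: "(nat \<times> nat) list \<Rightarrow> kexp \<Rightarrow> kexp" where
  "rhoL [] e = e"
| "rhoL (p # ps) e = KRho (fst p) (snd p) (rhoL ps e)"

lemma etaL_verts[simp]: "kverts (etaL ps e) = kverts e" by (induction ps) auto
lemma etaL_lab[simp]: "klab (etaL ps e) = klab e" by (induction ps) auto
lemma etaL_edges: "kedges (etaL ps e) = kedges e \<union> {(u, v). u \<in> kverts e \<and> v \<in> kverts e \<and>
   (\<exists>p\<in>set ps. (klab e u = fst p \<and> klab e v = snd p) \<or> (klab e u = snd p \<and> klab e v = fst p))}"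
  by (induction ps) auto
lemma etaL_expr: "(\<forall>p\<in>set ps. fst p \<in> {1..N} \<and> snd p \<in> {1..N} \<and> fst p \<noteq> snd p) \<Longrightarrow> kexpr N e
   \<Longrightarrow> kexpr N (etaL ps e)"
  by (induction ps) auto

lemma rhoL_verts[simp]: "kverts (rhoL ps e) = kverts e" by (induction ps) auto
lemma rhoL_edges[simp]: "kedges (rhoL ps e) = kedges e" by (induction ps) auto
lemma rhoL_expr: "(\<forall>p\<in>set ps. fst p \<in> {1..N} \<and> snd p \<in> {1..N}) \<Longrightarrow> kexpr N e
   \<Longrightarrow> kexpr N (rhoL ps e)"
  by (induction ps) auto

lemma rhoL_lab:
  assumes "distinct (map fst ps)" "\<forall>p\<in>set ps. snd p = h (fst p) \<and> h (fst p) \<noteq> fst p \<and> h (h (fst p)) = h (fst p)"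
  shows "klab (rhoL ps e) v = (if klab e v \<in> fst ` set ps then h (klab e v) else klab e v)"
  using assms
proof (induction ps)
  case Nil
  then show ?case by simp
next
  case (Cons p ps)
  obtain a b where p: "p = (a, b)" by (cases p)
  have IH: "klab (rhoL ps e) v = (if klab e v \<in> fst ` set ps then h (klab e v) else klab e v)"
    using Cons by auto
  have ab: "b = h a" "h a \<noteq> a" "h (h a) = h a" "a \<notin> fst ` set ps" using Cons.prems p by auto
  show ?case
  proof (cases "klab e v \<in> fst ` set ps")
    case True
    then have "h (h (klab e v)) = h (klab e v)" "h (klab e v) \<noteq> klab e v" using Cons.prems by auto
    then have "h (klab e v) \<noteq> a" using ab by metis
    then show ?thesis using IH True p by simp
  next
    case False
    then show ?thesis using IH p ab by auto
  qed
qed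

fun katoms :: "nat \<Rightarrow> nat \<Rightarrow> kexp" where
  "katoms 0 l = KAtom l"
| "katoms (Suc n) l = KUnion (KAtom l) (katoms n l)"

lemma katoms_fin: "finite (kverts (katoms n l))" by (induction n) auto
lemma katoms_card: "card (kverts (katoms n l)) = Suc n"
proof (induction n)
  case (Suc n)
  have "card (Cons 1 ` kverts (katoms n l)) = Suc n"
    using Suc by (simp add: card_image)
  moreover have "Cons 0 ` {[]} \<inter> Cons 1 ` kverts (katoms n l) = {}" by auto
  ultimately show ?case using katoms_fin[of n l] by (simp add: card_Un_disjoint card_image)
qed simp
lemma katoms_edges[simp]: "kedges (katoms n l) = {}" by (induction n) auto
lemma katoms_lab: "v \<in> kverts (katoms n l) \<Longrightarrow> klab (katoms n l) v = l"
  by (induction n arbitrary: v) auto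
lemma katoms_expr: "l \<in> {1..N} \<Longrightarrow> kexpr N (katoms n l)" by (induction n) auto

lemma mlab_bound: "mexpr k e \<Longrightarrow> v \<in> mverts e \<Longrightarrow> mlab e v \<subseteq> {1..k}"
proof (induction e arbitrary: v)
  case (MRho i S e)
  then show ?case by (auto split: if_splits)
next
  case (MUnion a b)
  then show ?case by (auto simp del: atLeastAtMost_iff) blast+
qed auto


definition good :: "(nat set \<Rightarrow> nat) \<Rightarrow> nat \<Rightarrow> mexp \<Rightarrow> kexp \<Rightarrow> bool" where
  "good enc k e e' \<longleftrightarrow> kexpr (2^k) e' \<and> (\<exists>f. bij_betw f (mverts e) (kverts e') \<and>
     (\<forall>u\<in>mverts e. \<forall>v\<in>mverts e. (u, v) \<in> medges e \<longleftrightarrow> (f u, f v) \<in> kedges e') \<and>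
     (\<forall>v\<in>mverts e. klab e' (f v) = enc (mlab e v)))"

lemma good_relabel:
  assumes enc: "bij_betw enc (Pow {1..k}) {1..2^k}"
    and me: "mexpr k e" and gd: "good enc k e e'"
    and gP: "\<And>X. X \<subseteq> {1..k} \<Longrightarrow> g X \<subseteq> {1..k}"
    and gi: "\<And>X. X \<subseteq> {1..k} \<Longrightarrow> g (g X) = g X"
    and v2: "mverts e2 = mverts e" and ed2: "medges e2 = medges e"
    and l2: "\<And>v. mlab e2 v = g (mlab e v)"
  shows "\<exists>e''. good enc k e2 e''"
proof -
  let ?P = "Pow {1..k}" and ?A = "{1..(2::nat)^k}"
  define h where "h a = enc (g (inv_into ?P enc a))" for a
  have invP: "inv_into ?P enc a \<in> ?P" if "a \<in> ?A" for a
    using enc that by (metis bij_betw_def inv_into_into)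
  have hA: "h a \<in> ?A" if "a \<in> ?A" for a
    using invP[OF that] gP enc unfolding h_def bij_betw_def by auto
  have hX: "h (enc X) = enc (g X)" if "X \<subseteq> {1..k}" for X
    using that enc unfolding h_def bij_betw_def by (simp add: inv_into_f_f)
  have hh: "h (h a) = h a" if "a \<in> ?A" for a
  proof -
    have "g (inv_into ?P enc a) \<subseteq> {1..k}" using invP[OF that] gP by auto
    then show ?thesis unfolding h_def[of a] using hX gi invP[OF that] by auto
  qed
  define ps where "ps = map (\<lambda>a. (a, h a)) (sorted_list_of_set {a\<in>?A. h a \<noteq> a})"
  have dist: "distinct (map fst ps)" unfolding ps_def by (simp add: o_def)
  have setps: "fst ` set ps = {a\<in>?A. h a \<noteq> a}" unfolding ps_def by (auto simp: image_image)
  have psprop: "\<forall>p\<in>set ps. snd p = h (fst p) \<and> h (fst p) \<noteq> fst p \<and> h (h (fst p)) = h (fst p)"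
    unfolding ps_def using hh by auto
  have psA: "\<forall>p\<in>set ps. fst p \<in> ?A \<and> snd p \<in> ?A" unfolding ps_def using hA by auto
  obtain f where f: "bij_betw f (mverts e) (kverts e')"
     "\<forall>u\<in>mverts e. \<forall>v\<in>mverts e. (u, v) \<in> medges e \<longleftrightarrow> (f u, f v) \<in> kedges e'"
     "\<forall>v\<in>mverts e. klab e' (f v) = enc (mlab e v)" and ke: "kexpr (2^k) e'"
    using gd unfolding good_def by blast
  have "kexpr (2^k) (rhoL ps e')" using rhoL_expr psA ke by blast
  moreover have "\<forall>v\<in>mverts e2. klab (rhoL ps e') (f v) = enc (mlab e2 v)"
  proof
    fix v assume "v \<in> mverts e2"
    then have v: "v \<in> mverts e" using v2 by simp
    have X: "mlab e v \<subseteq> {1..k}" using mlab_bound[OF me v] .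
    have lA: "enc (mlab e v) \<in> ?A" using X enc unfolding bij_betw_def by auto
    show "klab (rhoL ps e') (f v) = enc (mlab e2 v)"
      unfolding rhoL_lab[OF dist psprop] setps l2 using f(3) v hX[OF X] lA by auto
  qed
  ultimately have "good enc k e2 (rhoL ps e')"
    unfolding good_def using f v2 ed2 by auto
  then show ?thesis by blast
qed


lemma good_eta:
  assumes enc: "bij_betw enc (Pow {1..k}) {1..2^k}"
    and me: "mexpr k (MEta i j e)" and gd: "good enc k e e'"
  shows "\<exists>e''. good enc k (MEta i j e) e''"
proof -
  let ?P = "Pow {1..k}"
  have ij: "i \<in> {1..k}" "j \<in> {1..k}" "i \<noteq> j" and me': "mexpr k e"
    and nb: "\<forall>v\<in>mverts e. \<not> (i \<in> mlab e v \<and> j \<in> mlab e v)" using me by auto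
  define Q where "Q = (\<lambda>(S, T). (enc S, enc T)) ` {(S, T). S \<in> ?P \<and> T \<in> ?P \<and> i \<in> S \<and> j \<notin> S \<and> j \<in> T \<and> i \<notin> T}"
  have "finite Q" unfolding Q_def
    by (rule finite_imageI, rule finite_subset[of _ "?P \<times> ?P"]) auto
  then obtain ps where ps: "set ps = Q" using finite_list by blast
  have injE: "inj_on enc ?P" using enc by (simp add: bij_betw_def)
  have Qprop: "\<forall>p\<in>set ps. fst p \<in> {1..2^k} \<and> snd p \<in> {1..2^k} \<and> fst p \<noteq> snd p"
  proof
    fix p assume "p \<in> set ps"
    then obtain S T where p: "p = (enc S, enc T)" "S \<in> ?P" "T \<in> ?P" "i \<in> S" "i \<notin> T"
      unfolding ps Q_def by auto
    have "enc S \<noteq> enc T" using injE p by (metis inj_on_def)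
    then show "fst p \<in> {1..2^k} \<and> snd p \<in> {1..2^k} \<and> fst p \<noteq> snd p"
      using p enc unfolding bij_betw_def by auto
  qed
  obtain f where f: "bij_betw f (mverts e) (kverts e')"
     "\<forall>u\<in>mverts e. \<forall>v\<in>mverts e. (u, v) \<in> medges e \<longleftrightarrow> (f u, f v) \<in> kedges e'"
     "\<forall>v\<in>mverts e. klab e' (f v) = enc (mlab e v)" and ke: "kexpr (2^k) e'"
    using gd unfolding good_def by blast
  have fv: "f v \<in> kverts e'" if "v \<in> mverts e" for v using f(1) that by (auto simp: bij_betw_def)
  have key: "(\<exists>p\<in>set ps. (klab e' (f u) = fst p \<and> klab e' (f v) = snd p) \<or> (klab e' (f u) = snd p \<and> klab e' (f v) = fst p))
     \<longleftrightarrow> ((i \<in> mlab e u \<and> j \<in> mlab e v) \<or> (j \<in> mlab e u \<and> i \<in> mlab e v))"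
    if u: "u \<in> mverts e" and v: "v \<in> mverts e" for u v
  proof -
    have Lu: "mlab e u \<in> ?P" and Lv: "mlab e v \<in> ?P" using mlab_bound[OF me'] u v by auto
    have eq: "enc X = enc Y \<longleftrightarrow> X = Y" if "X \<in> ?P" "Y \<in> ?P" for X Y
      using injE that by (meson inj_on_def)
    show ?thesis
    proof
      assume "\<exists>p\<in>set ps. (klab e' (f u) = fst p \<and> klab e' (f v) = snd p) \<or> (klab e' (f u) = snd p \<and> klab e' (f v) = fst p)"
      then obtain S T where ST: "S \<in> ?P" "T \<in> ?P" "i \<in> S" "j \<in> T"
        "(enc (mlab e u) = enc S \<and> enc (mlab e v) = enc T) \<or> (enc (mlab e u) = enc T \<and> enc (mlab e v) = enc S)"
        unfolding ps Q_def using f(3) u v by auto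
      then show "(i \<in> mlab e u \<and> j \<in> mlab e v) \<or> (j \<in> mlab e u \<and> i \<in> mlab e v)"
        using eq Lu Lv by auto
    next
      assume h: "(i \<in> mlab e u \<and> j \<in> mlab e v) \<or> (j \<in> mlab e u \<and> i \<in> mlab e v)"
      show "\<exists>p\<in>set ps. (klab e' (f u) = fst p \<and> klab e' (f v) = snd p) \<or> (klab e' (f u) = snd p \<and> klab e' (f v) = fst p)"
      proof (cases "i \<in> mlab e u \<and> j \<in> mlab e v")
        case True
        then have "j \<notin> mlab e u" "i \<notin> mlab e v" using nb u v by auto
        then have "(enc (mlab e u), enc (mlab e v)) \<in> Q" unfolding Q_def
          by (intro image_eqI[where x="(mlab e u, mlab e v)"]) (use True Lu Lv in auto)
        then show ?thesis unfolding ps using f(3) u v by force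
      next
        case False
        then have T: "j \<in> mlab e u" "i \<in> mlab e v" using h by auto
        then have "i \<notin> mlab e u" "j \<notin> mlab e v" using nb u v by auto
        then have "(enc (mlab e v), enc (mlab e u)) \<in> Q" unfolding Q_def
          by (intro image_eqI[where x="(mlab e v, mlab e u)"]) (use T Lu Lv in auto)
        then show ?thesis unfolding ps using f(3) u v by force
      qed
    qed
  qed
  have "kexpr (2^k) (etaL ps e')" using etaL_expr[OF Qprop ke] .
  moreover have "\<forall>u\<in>mverts e. \<forall>v\<in>mverts e. (u, v) \<in> medges (MEta i j e) \<longleftrightarrow> (f u, f v) \<in> kedges (etaL ps e')"
    unfolding etaL_edges using f(2) key fv by auto
  ultimately have "good enc k (MEta i j e) (etaL ps e')"
    unfolding good_def using f by auto
  then show ?thesis by blast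
qed

lemma good_atom:
  assumes enc: "bij_betw enc (Pow {1..k}) {1..2^k}"
    and me: "mexpr k (MAtom m S)"
  shows "\<exists>e''. good enc k (MAtom m S) e''"
proof -
  have m: "0 < m" and S: "S \<subseteq> {1..k}" using me by auto
  define e' where "e' = katoms (m - 1) (enc S)"
  have encS: "enc S \<in> {1..2^k}" using enc S unfolding bij_betw_def by auto
  have mv: "mverts (MAtom m S) = (\<lambda>n. [n]) ` {..<m}" by auto
  have c1: "card (mverts (MAtom m S)) = m" unfolding mv by (subst card_image) (auto simp: inj_on_def)
  have c2: "card (kverts e') = m" unfolding e'_def katoms_card using m by simp
  have fin1: "finite (mverts (MAtom m S))" unfolding mv by simp
  have fin2: "finite (kverts e')" unfolding e'_def by (rule katoms_fin)
  obtain f where f: "bij_betw f (mverts (MAtom m S)) (kverts e')"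
    using finite_same_card_bij[OF fin1 fin2] c1 c2 by metis
  have "\<forall>v\<in>mverts (MAtom m S). klab e' (f v) = enc (mlab (MAtom m S) v)"
  proof
    fix v assume v: "v \<in> mverts (MAtom m S)"
    have "f v \<in> kverts e'" using f v by (rule bij_betw_apply)
    then show "klab e' (f v) = enc (mlab (MAtom m S) v)" unfolding e'_def by (simp add: katoms_lab)
  qed
  moreover have "kexpr (2^k) e'" unfolding e'_def using katoms_expr[OF encS] .
  ultimately have "good enc k (MAtom m S) e'" unfolding good_def using f e'_def by auto
  then show ?thesis by blast
qed

lemma pair_img_iff:
  fixes c d e :: nat
  shows "((c # x, d # y) \<in> (\<lambda>(u, v). (e # u, e # v)) ` R) \<longleftrightarrow> (c = e \<and> d = e \<and> (x, y) \<in> R)"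
  by (auto simp: image_iff split_def; metis fst_conv snd_conv)

lemma bij_cons:
  assumes "bij_betw g A B" "\<forall>w\<in>A. f (c # w) = c # g w"
  shows "bij_betw f (Cons c ` A) (Cons c ` B)"
proof -
  have "inj_on f (Cons c ` A)"
  proof (rule inj_onI)
    fix x y assume "x \<in> Cons c ` A" "y \<in> Cons c ` A" "f x = f y"
    then obtain x' y' where "x = c # x'" "y = c # y'" "x' \<in> A" "y' \<in> A" "g x' = g y'"
      using assms(2) by auto
    then show "x = y" using assms(1) by (metis bij_betw_def inj_on_def)
  qed
  moreover have "f ` Cons c ` A = Cons c ` B"
  proof -
    have "f ` Cons c ` A = (\<lambda>w. c # g w) ` A" using assms(2) by (simp add: image_image)
    also have "\<dots> = Cons c ` g ` A" by (simp add: image_image)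
    finally show ?thesis using assms(1) by (simp add: bij_betw_def)
  qed
  ultimately show ?thesis by (simp add: bij_betw_def)
qed

lemma good_union:
  assumes "good enc k a a'" "good enc k b b'"
  shows "good enc k (MUnion a b) (KUnion a' b')"
proof -
  obtain f1 where f1: "bij_betw f1 (mverts a) (kverts a')"
     "\<forall>u\<in>mverts a. \<forall>v\<in>mverts a. (u, v) \<in> medges a \<longleftrightarrow> (f1 u, f1 v) \<in> kedges a'"
     "\<forall>v\<in>mverts a. klab a' (f1 v) = enc (mlab a v)" and k1: "kexpr (2^k) a'"
    using assms(1) unfolding good_def by blast
  obtain f2 where f2: "bij_betw f2 (mverts b) (kverts b')"
     "\<forall>u\<in>mverts b. \<forall>v\<in>mverts b. (u, v) \<in> medges b \<longleftrightarrow> (f2 u, f2 v) \<in> kedges b'"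
     "\<forall>v\<in>mverts b. klab b' (f2 v) = enc (mlab b v)" and k2: "kexpr (2^k) b'"
    using assms(2) unfolding good_def by blast
  define f where "f v = (if hd v = 0 then 0 # f1 (tl v) else 1 # f2 (tl v))" for v
  have f0: "f (0 # w) = 0 # f1 w" and f1': "f (1 # w) = 1 # f2 w" "f (Suc 0 # w) = Suc 0 # f2 w" for w unfolding f_def by auto
  have bij: "bij_betw f (mverts (MUnion a b)) (kverts (KUnion a' b'))"
  proof -
    have "bij_betw f (Cons 0 ` mverts a) (Cons 0 ` kverts a')"
      using f1(1) by (rule bij_cons) (simp add: f0)
    moreover have "bij_betw f (Cons 1 ` mverts b) (Cons 1 ` kverts b')"
      using f2(1) by (rule bij_cons) (simp add: f1')
    ultimately show ?thesis
      unfolding mverts.simps kverts.simps by (rule bij_betw_combine) auto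
  qed
  have edges: "\<forall>u\<in>mverts (MUnion a b). \<forall>v\<in>mverts (MUnion a b).
     (u, v) \<in> medges (MUnion a b) \<longleftrightarrow> (f u, f v) \<in> kedges (KUnion a' b')"
  proof (intro ballI)
    fix u v assume u: "u \<in> mverts (MUnion a b)" and v: "v \<in> mverts (MUnion a b)"
    from u consider (ua) x where "u = 0 # x" "x \<in> mverts a" | (ub) x where "u = 1 # x" "x \<in> mverts b" by auto
    then show "(u, v) \<in> medges (MUnion a b) \<longleftrightarrow> (f u, f v) \<in> kedges (KUnion a' b')"
    proof cases
      case ua
      from v consider (va) y where "v = 0 # y" "y \<in> mverts a" | (vb) y where "v = 1 # y" "y \<in> mverts b" by auto
      then show ?thesis
      proof cases
        case va
        then show ?thesis using ua f1(2) by (simp add: f0 pair_img_iff)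
      next
        case vb
        then show ?thesis using ua by (simp add: f0 f1' pair_img_iff)
      qed
    next
      case ub
      from v consider (va) y where "v = 0 # y" "y \<in> mverts a" | (vb) y where "v = 1 # y" "y \<in> mverts b" by auto
      then show ?thesis
      proof cases
        case va
        then show ?thesis using ub by (simp add: f0 f1' pair_img_iff)
      next
        case vb
        then show ?thesis using ub f2(2) by (simp add: f1' pair_img_iff)
      qed
    qed
  qed
  have labs: "\<forall>v\<in>mverts (MUnion a b). klab (KUnion a' b') (f v) = enc (mlab (MUnion a b) v)"
  proof
    fix v assume v: "v \<in> mverts (MUnion a b)"
    then consider (va) y where "v = 0 # y" "y \<in> mverts a" | (vb) y where "v = 1 # y" "y \<in> mverts b" by auto
    then show "klab (KUnion a' b') (f v) = enc (mlab (MUnion a b) v)"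
    proof cases
      case va then show ?thesis using f1(3) by (simp add: f0)
    next
      case vb then show ?thesis using f2(3) by (simp add: f1')
    qed
  qed
  show ?thesis unfolding good_def using bij edges labs k1 k2 by auto
qed

lemma good_exists:
  assumes enc: "bij_betw enc (Pow {1..k}) {1..2^k}"
  shows "mexpr k e \<Longrightarrow> \<exists>e'. good enc k e e'"
proof (induction e)
  case (MAtom m S)
  then show ?case using good_atom[OF enc] by blast
next
  case (MEta i j e)
  then show ?case using good_eta[OF enc] by auto
next
  case (MRho i S e)
  then have me: "mexpr k e" and iS: "S \<subseteq> {1..k}" by auto
  then obtain e' where "good enc k e e'" using MRho by blast
  show ?case
    by (rule good_relabel[OF enc me \<open>good enc k e e'\<close>, where g = "\<lambda>X. if i \<in> X then (X - {i}) \<union> S else X"])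
       (use iS in auto)
next
  case (MEps i e)
  then have me: "mexpr k e" by auto
  then obtain e' where "good enc k e e'" using MEps by blast
  show ?case
    by (rule good_relabel[OF enc me \<open>good enc k e e'\<close>, where g = "\<lambda>X. X - {i}"]) auto
next
  case (MUnion a b)
  then obtain a' b' where "good enc k a a'" "good enc k b b'" by auto
  then show ?case using good_union by blast
qed


lemma enc_exists: "\<exists>enc. bij_betw enc (Pow {1..k::nat}) {1..(2::nat)^k}"
  by (rule finite_same_card_bij) (auto simp: card_Pow)

theorem mainTheorem2:
  fixes V :: "'v set" and E :: "('v \<times> 'v) set"
  assumes "fin_graph V E"
  shows "cw V E \<le> 2 ^ mcw V E"
proof (cases "\<exists>k e. mexpr k e \<and> graph_iso (mverts e) (medges e) V E")
  case True
  define k where "k = mcw V E"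
  have "\<exists>e. mexpr k e \<and> graph_iso (mverts e) (medges e) V E"
    unfolding k_def mcw_def using True by (rule LeastI_ex)
  then obtain M where M: "mexpr k M" "graph_iso (mverts M) (medges M) V E" by blast
  obtain enc where enc: "bij_betw enc (Pow {1..k}) {1..(2::nat)^k}" using enc_exists by blast
  obtain e' where "good enc k M e'" using good_exists[OF enc M(1)] by blast
  then have ke: "kexpr (2^k) e'" and iso1: "graph_iso (mverts M) (medges M) (kverts e') (kedges e')"
    unfolding good_def graph_iso_def by blast+
  have "graph_iso (kverts e') (kedges e') V E" using iso_trans[OF iso_sym[OF iso1] M(2)] .
  then have "\<exists>e. kexpr (2^k) e \<and> graph_iso (kverts e) (kedges e) V E" using ke by blast
  then show ?thesis unfolding cw_def k_def[symmetric] by (rule Least_le)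
next
  case False
  have nk: "\<not> (\<exists>e. kexpr k e \<and> graph_iso (kverts e) (kedges e) V E)" for k
  proof
    assume "\<exists>e. kexpr k e \<and> graph_iso (kverts e) (kedges e) V E"
    then obtain e where e: "kexpr k e" "graph_iso (kverts e) (kedges e) V E" by blast
    have "graph_iso (mverts (tr e)) (medges (tr e)) V E"
      using iso_trans[OF iso_sym[OF tr_iso] e(2)] .
    then show False using False tr_expr[OF e(1)] by blast
  qed
  have nm: "\<not> (\<exists>e. mexpr k e \<and> graph_iso (mverts e) (medges e) V E)" for k using False by blast
  have "cw V E = (LEAST k::nat. False)" unfolding cw_def by (rule arg_cong[where f=Least]) (use nk in blast)
  moreover have "mcw V E = (LEAST k::nat. False)" unfolding mcw_def by (rule arg_cong[where f=Least]) (use nm in blast)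
  ultimately have "cw V E = mcw V E" by simp
  then show ?thesis by (simp add: less_imp_le)
qed

end
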